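(* The group $N/g_SN$ is isomorphic to $\mathbb{Z}/g_S\mathbb{Z}$. Moreover, for every finite $1\leq k\leq\lvert S\rvert$, the group $N/g_kN$ is isomorphic to a subgroup of $\mathbb{Z}/g_k\mathbb{Z}$.
   Context: $S\subset\{2,3,\dots\}$ is a non-empty (possibly infinite) set of pairwise relatively prime integers, $N:=\mathbb{Z}[\{1/p:p\in S\}]\subset\mathbb{Q}$, $g_S:=\gcd(\{p-1:p\in S\})$, and for $1\leq k\leq\lvert S\rvert$, $g_k:=\gcd(p_1-1,\dots,p_k-1)$ where $p_1<\dots<p_k$ are the $k$ smallest elements of $S$. *)

theory Defs
  imports Complex_Main "HOL-Algebra.Elementary_Groups"
begin

inductive_set Nring :: "nat set \<Rightarrow> rat set" for S :: "nat set" where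
  one: "1 \<in> Nring S"
| inv: "p \<in> S \<Longrightarrow> 1 / of_nat p \<in> Nring S"
| add: "x \<in> Nring S \<Longrightarrow> y \<in> Nring S \<Longrightarrow> x + y \<in> Nring S"
| neg: "x \<in> Nring S \<Longrightarrow> - x \<in> Nring S"
| mult: "x \<in> Nring S \<Longrightarrow> y \<in> Nring S \<Longrightarrow> x * y \<in> Nring S"

definition Ngroup :: "nat set \<Rightarrow> rat monoid" where
  "Ngroup S = \<lparr>carrier = Nring S, monoid.mult = (+), one = 0\<rparr>"

definition multN :: "nat \<Rightarrow> nat set \<Rightarrow> rat set" where
  "multN g S = (\<lambda>x. of_nat g * x) ` Nring S"

definition gS :: "nat set \<Rightarrow> nat" where
  "gS S = Gcd ((\<lambda>p. p - 1) ` S)"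

definition smallest :: "nat \<Rightarrow> nat set \<Rightarrow> nat set" where
  "smallest k S = {p \<in> S. card {q \<in> S. q < p} < k}"

definition gk :: "nat \<Rightarrow> nat set \<Rightarrow> nat" where
  "gk k S = Gcd ((\<lambda>p. p - 1) ` smallest k S)"

end

theory Submission imports Defs begin

lemma N_int: "of_int n \<in> Nring S"
proof -
  have nat: "of_nat m \<in> Nring S" for m
  proof (induction m)
    case 0 have "(1::rat) + - 1 \<in> Nring S" by (intro Nring.add Nring.neg Nring.one)
    then show ?case by simp
  next
    case (Suc m) then show ?case using Nring.add[OF Suc Nring.one] by (simp add: add.commute)
  qed
  show ?thesis
  proof (cases "n \<ge> 0")
    case True then show ?thesis using nat[of "nat n"] by simp
  next
    case False then show ?thesis using Nring.neg[OF nat[of "nat (-n)"]] by simp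
  qed
qed

lemma N_diff: "x \<in> Nring S \<Longrightarrow> y \<in> Nring S \<Longrightarrow> x - y \<in> Nring S"
  using Nring.add[OF _ Nring.neg] by (metis diff_conv_add_uminus)

lemma N_zero: "0 \<in> Nring S"
  using N_int[of 0 S] by simp

lemma N_pow: "x \<in> Nring S \<Longrightarrow> x ^ m \<in> Nring S"
  by (induction m) (auto intro: Nring.mult Nring.one)

lemma group_N: "comm_group (Ngroup S)"
proof -
  have "group (Ngroup S)"
    apply (rule groupI)
    apply (auto simp: Ngroup_def intro: Nring.add N_zero)
    by (metis Nring.neg add.left_inverse)
  then show ?thesis
    by (rule group.group_comm_groupI) (auto simp: Ngroup_def)
qed

lemma multN_iff: "g > 0 \<Longrightarrow> x \<in> multN g S \<longleftrightarrow> x / of_nat g \<in> Nring S"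
proof
  assume "g > 0" "x \<in> multN g S"
  then obtain y where "y \<in> Nring S" "x = of_nat g * y" by (auto simp: multN_def)
  then show "x / of_nat g \<in> Nring S" using \<open>g > 0\<close> by simp
next
  assume "g > 0" "x / of_nat g \<in> Nring S"
  moreover have "x = of_nat g * (x / of_nat g)" using \<open>g > 0\<close> by simp
  ultimately show "x \<in> multN g S" unfolding multN_def by blast
qed

lemma subgroup_multN: assumes "g > 0" shows "subgroup (multN g S) (Ngroup S)"
proof
  show "multN g S \<subseteq> carrier (Ngroup S)"
    by (auto simp: multN_def Ngroup_def intro!: Nring.mult N_int[of "int g", simplified])
  show "x \<otimes>\<^bsub>Ngroup S\<^esub> y \<in> multN g S" if "x \<in> multN g S" "y \<in> multN g S" for x y
    using that assms by (auto simp: multN_iff Ngroup_def add_divide_distrib intro: Nring.add)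
  show "\<one>\<^bsub>Ngroup S\<^esub> \<in> multN g S" using assms by (simp add: multN_iff Ngroup_def N_zero)
  show "inv\<^bsub>Ngroup S\<^esub> x \<in> multN g S" if "x \<in> multN g S" for x
  proof -
    have c: "x \<in> Nring S" using that by (auto simp: multN_def intro!: Nring.mult N_int[of "int g", simplified])
    have "inv\<^bsub>Ngroup S\<^esub> x = - x"
      by (rule group.inv_equality[OF comm_group.axioms(2)[OF group_N]]) (auto simp: Ngroup_def c intro: Nring.neg)
    then show ?thesis using that assms by (auto simp: multN_iff intro: Nring.neg)
  qed
qed

lemma inv_case:
  fixes p g :: nat
  assumes "g > 0" "p > 0" "1 / of_nat p \<in> Nring S"
  shows "\<exists>n::int. (1 / of_nat p - of_int n) / of_nat g \<in> Nring S"
proof -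
  define f where "f i = p ^ i mod g" for i
  have "f ` {0..g} \<subseteq> {0..<g}" using assms by (auto simp: f_def)
  then have "card (f ` {0..g}) \<le> g" by (metis card_atLeastLessThan card_mono finite_atLeastLessThan minus_nat.diff_0)
  then have "\<not> inj_on f {0..g}" by (intro pigeonhole) simp
  then obtain i j where ij: "i \<in> {0..g}" "j \<in> {0..g}" "i \<noteq> j" "f i = f j" unfolding inj_on_def by blast
  have "\<exists>i j. i < j \<and> f i = f j"
    using ij by (metis linorder_neqE_nat)
  then obtain i j where ij: "i < j" "p ^ i mod g = p ^ j mod g" by (auto simp: f_def)
  then have "int g dvd (int p ^ j - int p ^ i)"
    by (metis mod_eq_dvd_iff of_nat_mod of_nat_power)
  then obtain c where c: "int p ^ j - int p ^ i = int g * c" by (elim dvdE)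
  define t where "t = j - i"
  have t: "j = i + t" "t \<ge> 1" using ij by (auto simp: t_def)
  have cq: "(of_nat p :: rat) ^ i * (of_nat p ^ t - 1) = of_nat g * of_int c"
  proof -
    have "(of_int (int p ^ j - int p ^ i) :: rat) = of_int (int g * c)" using c by simp
    then show ?thesis by (simp add: t power_add algebra_simps)
  qed
  have pt: "(of_nat p :: rat) ^ t = of_nat p * of_nat p ^ (t - 1)" using t
    by (metis Suc_diff_le diff_Suc_1 power_Suc)
  have key: "(1 / of_nat p - of_int (int p ^ (t - 1))) / of_nat g = - (of_int c * (1 / of_nat p) ^ (i + 1) :: rat)"
  proof -
    have p0: "(of_nat p :: rat) \<noteq> 0" using assms by simp
    have g0: "(of_nat g :: rat) \<noteq> 0" using assms by simp
    have "(of_nat p :: rat) ^ (i+1) * (1 / of_nat p - of_nat p ^ (t - 1)) = - (of_nat p ^ i * (of_nat p ^ t - 1))"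
      using p0 by (simp add: pt field_simps)
    also have "\<dots> = - (of_nat g * of_int c)" by (simp add: cq)
    finally show ?thesis using p0 g0 by (simp add: field_simps)
  qed
  have "- (of_int c * (1 / of_nat p) ^ (i + 1) :: rat) \<in> Nring S"
    by (intro Nring.neg Nring.mult N_int N_pow assms)
  then show ?thesis using key by metis
qed

lemma N_cong_int:
  fixes g :: nat
  assumes "g > 0" "\<forall>p\<in>S. p > 0" "x \<in> Nring S"
  shows "\<exists>n::int. (x - of_int n) / of_nat g \<in> Nring S"
  using assms(3)
proof (induction x rule: Nring.induct)
  case one
  then show ?case by (rule exI[of _ 1]) (simp add: N_zero)
next
  case (inv p)
  then show ?case using inv_case[of g p S] assms(1,2) Nring.inv[OF inv] by simp
next
  case (add x y)
  then obtain n m where "(x - of_int n) / of_nat g \<in> Nring S" "(y - of_int m) / of_nat g \<in> Nring S" by blast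
  from Nring.add[OF this] show ?case
    by (intro exI[of _ "n+m"]) (simp add: add_divide_distrib[symmetric] algebra_simps)
next
  case (neg x)
  then obtain n where "(x - of_int n) / of_nat g \<in> Nring S" by blast
  from Nring.neg[OF this] show ?case
    by (intro exI[of _ "-n"]) (simp add: minus_divide_left algebra_simps)
next
  case (mult x y)
  then obtain n m where a: "(x - of_int n) / of_nat g \<in> Nring S" and b: "(y - of_int m) / of_nat g \<in> Nring S" by blast
  define a' where "a' = (x - of_int n) / of_nat g"
  define b' where "b' = (y - of_int m) / of_nat g"
  have x: "x = of_int n + of_nat g * a'" and y: "y = of_int m + of_nat g * b'"
    using assms(1) unfolding a'_def b'_def by simp_all
  have "(x * y - of_int (n * m)) / of_nat g = a' * of_int m + of_int n * b' + of_nat g * a' * b'"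
    using assms(1) unfolding x y by (simp add: field_simps)
  moreover have "a' * of_int m + of_int n * b' + of_nat g * a' * b' \<in> Nring S"
    using a b unfolding a'_def[symmetric] b'_def[symmetric]
    by (intro Nring.add Nring.mult N_int) (auto intro: N_int[of "int g", simplified])
  ultimately show ?case by metis
qed

lemma mod1_mult: "(d::nat) mod g = 1 mod g \<Longrightarrow> e mod g = 1 mod g \<Longrightarrow> (d * e) mod g = 1 mod g"
  by (metis mod_mult_eq mult_1)

lemma N_denom:
  fixes g :: nat
  assumes "\<forall>p\<in>S. g dvd p - 1" "\<forall>p\<in>S. p > 0" "x \<in> Nring S"
  shows "\<exists>d::nat. d mod g = 1 mod g \<and> d > 0 \<and> of_nat d * x \<in> \<int>"
  using assms(3)
proof (induction x rule: Nring.induct)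
  case one
  then show ?case by (intro exI[of _ 1]) auto
next
  case (inv p)
  then have "p mod g = 1 mod g" "p > 0" using assms
  proof -
    have p: "p > 0" using assms(2) inv by blast
    obtain c where c: "p - 1 = g * c" using assms(1) inv by blast
    have "p = 1 + c * g" using p c by (simp add: mult.commute)
    then have "p mod g = 1 mod g" by (metis mod_mult_self1)
    then show "p mod g = 1 mod g" "p > 0" using p by auto
  qed
  then show ?case by (intro exI[of _ p]) auto
next
  case (add x y)
  then obtain d e where d: "d mod g = 1 mod g" "d > 0" "of_nat d * x \<in> \<int>"
    and e: "e mod g = 1 mod g" "e > 0" "of_nat e * y \<in> \<int>" by blast
  have "of_nat (d*e) * (x + y) = of_nat e * (of_nat d * x) + of_nat d * (of_nat e * y)"
    by (simp add: algebra_simps)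
  also have "\<dots> \<in> \<int>" using d e by (meson Ints_add Ints_mult Ints_of_nat)
  finally show ?case using d e by (intro exI[of _ "d*e"]) (simp add: mod1_mult)
next
  case (neg x)
  then obtain d where d: "d mod g = 1 mod g" "d > 0" "of_nat d * x \<in> \<int>" by blast
  then show ?case by (intro exI[of _ d]) (auto intro: Ints_minus)
next
  case (mult x y)
  then obtain d e where d: "d mod g = 1 mod g" "d > 0" "of_nat d * x \<in> \<int>"
    and e: "e mod g = 1 mod g" "e > 0" "of_nat e * y \<in> \<int>" by blast
  have "of_nat (d*e) * (x * y) = (of_nat d * x) * (of_nat e * y)"
    by (simp add: algebra_simps)
  also have "\<dots> \<in> \<int>" using d e by (meson Ints_mult)
  finally show ?case using d e by (intro exI[of _ "d*e"]) (simp add: mod1_mult)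
qed

lemma int_in_gN:
  fixes g :: nat
  assumes "g > 0" "\<forall>p\<in>S. g dvd p - 1" "\<forall>p\<in>S. p > 0" "of_int n / of_nat g \<in> Nring S"
  shows "int g dvd n"
proof -
  obtain d :: nat where d: "d mod g = 1 mod g" "d > 0" "of_nat d * (of_int n / of_nat g) \<in> (\<int> :: rat set)"
    using N_denom[OF assms(2,3,4)] by blast
  then obtain a where a: "of_nat d * (of_int n / of_nat g) = (of_int a :: rat)" by (elim Ints_cases)
  then have "(of_int (int d * n) :: rat) = of_int (int g * a)" using assms(1) by (simp add: field_simps)
  then have "int d * n = int g * a" using of_int_eq_iff by blast
  then have "int g dvd int d * n" by simp
  moreover have "coprime (int g) (int d)"
  proof -
    have "gcd d g = gcd (d mod g) g" by (metis gcd.commute gcd_red_nat)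
    also have "\<dots> = gcd (1 mod g) g" using d(1) by simp
    also have "\<dots> = 1" by (cases "g = 1") auto
    finally have "coprime d g" by (simp only: coprime_iff_gcd_eq_1)
    then have "coprime g d" by (rule coprime_commute[THEN iffD1])
    then show ?thesis by simp
  qed
  ultimately show ?thesis by (simp add: coprime_dvd_mult_right_iff)
qed

lemma K_char:
  fixes g :: nat
  assumes g: "g > 0"
  shows "\<exists>q::nat. q > 0 \<and> q dvd g \<and> (\<forall>n. of_int n \<in> multN g S \<longleftrightarrow> int q dvd n)"
proof -
  define P where "P q \<longleftrightarrow> q > 0 \<and> (of_nat q :: rat) / of_nat g \<in> Nring S" for q :: nat
  have Pg: "P g" using g by (simp add: P_def Nring.one)
  define q where "q = (LEAST q. P q)"
  have Pq: "P q" unfolding q_def by (rule LeastI[of P, OF Pg])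
  have qmin: "\<And>r. P r \<Longrightarrow> q \<le> r" unfolding q_def by (rule Least_le)
  have q0: "q > 0" using Pq by (simp add: P_def)
  have K_iff: "of_int n \<in> multN g S \<longleftrightarrow> (of_int n :: rat) / of_nat g \<in> Nring S" for n
    using multN_iff[OF g] by blast
  have dvd_in: "(of_int n :: rat) / of_nat g \<in> Nring S" if qn: "int q dvd n" for n
  proof -
    obtain c where c: "n = int q * c" using qn by (elim dvdE)
    have "(of_int n :: rat) / of_nat g = of_int c * (of_nat q / of_nat g)" by (simp add: c)
    also have "\<dots> \<in> Nring S" using Pq by (intro Nring.mult N_int) (simp add: P_def)
    finally show ?thesis .
  qed
  have in_dvd: "int q dvd n" if n: "(of_int n :: rat) / of_nat g \<in> Nring S" for n
  proof (rule ccontr)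
    assume nd: "\<not> int q dvd n"
    define r where "r = n mod int q"
    have r: "r > 0" "r < int q" using nd q0 by (auto simp: r_def) (metis dvd_eq_mod_eq_0 le_less mod_int_pos_iff of_nat_0_less_iff)
    have req: "r = n - int q * (n div int q)" by (simp add: r_def minus_div_mult_eq_mod[symmetric] mult.commute)
    have "(of_int r :: rat) / of_nat g = of_int n / of_nat g - of_int (int q * (n div int q)) / of_nat g"
      by (simp add: req diff_divide_distrib)
    also have "\<dots> \<in> Nring S" using n dvd_in[of "int q * (n div int q)"] by (intro N_diff) auto
    finally have "P (nat r)" using r by (simp add: P_def)
    then have "q \<le> nat r" by (rule qmin)
    then show False using r by linarith
  qed
  have "int q dvd int g" using in_dvd[of "int g"] g by (simp add: Nring.one)
  then show ?thesis using q0 K_iff dvd_in in_dvd by (intro exI[of _ q]) auto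
qed

lemma quot_iso:
  fixes g q :: nat
  assumes g: "g > 0" and S: "\<forall>p\<in>S. p > 0" and q: "q > 0" "q dvd g"
    and K: "\<And>n. of_int n \<in> multN g S \<longleftrightarrow> int q dvd n"
  defines "H \<equiv> range (\<lambda>n::int. (int (g div q) * n) mod int g)"
  shows "subgroup H (integer_mod_group g) \<and>
         Ngroup S Mod multN g S \<cong> (integer_mod_group g)\<lparr>carrier := H\<rparr>"
proof -
  let ?G = "Ngroup S" and ?gN = "multN g S"
  interpret G: comm_group ?G by (rule group_N)
  have sub: "subgroup ?gN ?G" by (rule subgroup_multN[OF g])
  interpret nrm: normal ?gN ?G by (rule G.subgroup_imp_normal[OF sub])
  have carrG: "carrier ?G = Nring S" and multG: "\<And>x y. x \<otimes>\<^bsub>?G\<^esub> y = x + y" and oneG: "\<one>\<^bsub>?G\<^esub> = 0"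
    by (simp_all add: Ngroup_def)
  define chi where "chi n = ?gN #>\<^bsub>?G\<^esub> (of_int n :: rat)" for n :: int
  have grpQ: "group (?G Mod ?gN)" by (rule nrm.factorgroup_is_group)
  have chi_hom: "group_hom integer_group (?G Mod ?gN) chi"
  proof -
    have "chi \<in> hom integer_group (?G Mod ?gN)"
    proof (rule homI)
      show "chi x \<in> carrier (?G Mod ?gN)" for x
        unfolding chi_def FactGroup_def using sub
        using subgroup.subset[OF sub] by (auto intro!: G.rcosetsI simp: carrG N_int)
      show "chi (x \<otimes>\<^bsub>integer_group\<^esub> y) = chi x \<otimes>\<^bsub>?G Mod ?gN\<^esub> chi y" for x y
        unfolding chi_def FactGroup_def
        using nrm.rcos_sum[of "of_int x" "of_int y"] by (simp add: carrG N_int multG)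
    qed
    then show ?thesis using grpQ by (simp add: group_hom_def group_hom_axioms_def)
  qed
  have chi_onto: "chi ` carrier integer_group = carrier (?G Mod ?gN)"
  proof
    show "chi ` carrier integer_group \<subseteq> carrier (?G Mod ?gN)"
      using group_hom.homh[OF chi_hom] by (auto simp: hom_def)
    show "carrier (?G Mod ?gN) \<subseteq> chi ` carrier integer_group"
    proof
      fix X assume "X \<in> carrier (?G Mod ?gN)"
      then obtain x where x: "x \<in> Nring S" "X = ?gN #>\<^bsub>?G\<^esub> x"
        by (auto simp: FactGroup_def RCOSETS_def carrG)
      obtain n where n: "(x - of_int n) / of_nat g \<in> Nring S" using N_cong_int[OF g S x(1)] by blast
      have "x - of_int n \<in> ?gN" using n multN_iff[OF g] by blast
      then have "x \<in> ?gN #>\<^bsub>?G\<^esub> of_int n"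
        unfolding r_coset_def multG by (auto intro!: bexI[of _ "x - of_int n"])
      then have "?gN #>\<^bsub>?G\<^esub> of_int n = X"
        using G.repr_independence[OF _ _ sub] x by (simp add: carrG N_int)
      then show "X \<in> chi ` carrier integer_group" by (auto simp: chi_def)
    qed
  qed
  have kerchi: "kernel integer_group (?G Mod ?gN) chi = {n. int q dvd n}"
  proof -
    have "chi n = ?gN \<longleftrightarrow> of_int n \<in> ?gN" for n
    proof
      assume "of_int n \<in> ?gN" then show "chi n = ?gN"
        unfolding chi_def by (rule subgroup.rcos_const[OF sub G.is_group])
    next
      assume "chi n = ?gN"
      moreover have "of_int n \<in> ?gN #>\<^bsub>?G\<^esub> (of_int n :: rat)"
        using subgroup.one_closed[OF sub] unfolding r_coset_def multG oneG by force
      ultimately show "of_int n \<in> ?gN" by (simp add: chi_def)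
    qed
    then show ?thesis by (auto simp: kernel_def FactGroup_def K)
  qed
  define theta where "theta n = (int (g div q) * n) mod int g" for n :: int
  have th_hom0: "theta \<in> hom integer_group (integer_mod_group g)"
    by (rule homI) (auto simp: theta_def carrier_integer_mod_group g distrib_left mod_add_eq)
  interpret th0: group_hom integer_group "integer_mod_group g" theta
    using th_hom0 by (simp add: group_hom_def group_hom_axioms_def)
  have Hsub: "subgroup H (integer_mod_group g)"
    using th0.img_is_subgroup by (simp add: H_def theta_def[abs_def])
  let ?T = "(integer_mod_group g)\<lparr>carrier := H\<rparr>"
  have grpT: "group ?T" by (rule subgroup.subgroup_is_group[OF Hsub]) simp
  have th_hom: "group_hom integer_group ?T theta"
  proof -
    have "theta \<in> hom integer_group ?T"
      by (rule homI) (auto simp: theta_def H_def distrib_left mod_add_eq)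
    then show ?thesis using grpT by (simp add: group_hom_def group_hom_axioms_def)
  qed
  have th_onto: "theta ` carrier integer_group = carrier ?T"
    by (simp add: H_def theta_def[abs_def])
  have kerth: "kernel integer_group ?T theta = {n. int q dvd n}"
  proof -
    obtain m where m: "g = q * m" using q(2) by (elim dvdE)
    have m0: "m > 0" using g m by (cases m) auto
    have gq: "g div q = m" using m q by simp
    have "theta n = 0 \<longleftrightarrow> int q dvd n" for n
    proof -
      have "theta n = 0 \<longleftrightarrow> int m * int q dvd int m * n"
        using q(1) by (simp add: theta_def gq m mult.commute dvd_eq_mod_eq_0[symmetric])
      also have "\<dots> \<longleftrightarrow> int q dvd n" using m0 by simp
      finally show ?thesis .
    qed
    then show ?thesis by (auto simp: kernel_def)
  qed
  have i1: "integer_group Mod {n. int q dvd n} \<cong> ?G Mod ?gN"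
    using group_hom.FactGroup_iso[OF chi_hom chi_onto] kerchi by simp
  have i2: "integer_group Mod {n. int q dvd n} \<cong> ?T"
    using group_hom.FactGroup_iso[OF th_hom th_onto] kerth by simp
  have grpI: "group (integer_group Mod {n. int q dvd n})"
    using normal.factorgroup_is_group[OF group_hom.normal_kernel[OF th_hom]] kerth by simp
  have "?G Mod ?gN \<cong> ?T"
    using iso_trans[OF group.iso_sym[OF grpI i1] i2] .
  then show ?thesis using Hsub by simp
qed

lemma Gcd_pos:
  assumes "p \<in> A" "\<forall>p\<in>A. p \<ge> (2::nat)"
  shows "Gcd ((\<lambda>p. p - 1) ` A) > 0"
proof -
  have "p - 1 \<in> (\<lambda>p. p - 1) ` A" "p - 1 \<noteq> 0" using assms by auto
  moreover have "Gcd ((\<lambda>p. p - 1) ` A) dvd p - 1" by (rule Gcd_dvd) (use assms in auto)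
  ultimately show ?thesis by (metis dvd_0_left gr0I)
qed


theorem lemma6p11:
  fixes S :: "nat set"
  assumes "S \<noteq> {}"
    and "\<forall>p\<in>S. p \<ge> 2"
    and "pairwise coprime S"
  shows "(Ngroup S Mod multN (gS S) S) \<cong> integer_mod_group (gS S) \<and>
         (\<forall>k. 1 \<le> k \<and> (infinite S \<or> k \<le> card S) \<longrightarrow>
           (\<exists>H. subgroup H (integer_mod_group (gk k S)) \<and>
               (Ngroup S Mod multN (gk k S) S) \<cong> (integer_mod_group (gk k S))\<lparr>carrier := H\<rparr>))"
proof
  have S0: "\<forall>p\<in>S. p > 0" using assms(2) by force
  obtain p0 where p0: "p0 \<in> S" using assms(1) by blast
  define g where "g = gS S"
  have g0: "g > 0" unfolding g_def gS_def using Gcd_pos[OF p0 assms(2)] .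
  have gdvd: "\<forall>p\<in>S. g dvd p - 1" unfolding g_def gS_def by (simp add: Gcd_dvd)
  obtain q where q': "q > 0 \<and> q dvd g \<and> (\<forall>n. of_int n \<in> multN g S \<longleftrightarrow> int q dvd n)"
    using K_char[OF g0, of S] by (elim exE)
  then have q: "q > 0" "q dvd g" "\<And>n. of_int n \<in> multN g S \<longleftrightarrow> int q dvd n" by simp_all
  have "of_int (int q) \<in> multN g S" using q(3)[of "int q"] by simp
  then have "of_int (int q) / of_nat g \<in> Nring S" using multN_iff[OF g0] by blast
  then have "int g dvd int q" by (rule int_in_gN[OF g0 gdvd S0])
  then have "g dvd q" by (simp only: of_nat_dvd_iff)
  then have qg: "q = g" using q(2) by (rule dvd_antisym[symmetric])
  have "subgroup (range (\<lambda>n::int. (int (g div q) * n) mod int g)) (integer_mod_group g) \<and>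
         Ngroup S Mod multN g S \<cong> (integer_mod_group g)\<lparr>carrier := range (\<lambda>n::int. (int (g div q) * n) mod int g)\<rparr>"
    by (rule quot_iso[OF g0 S0 q])
  moreover have "range (\<lambda>n::int. (int (g div q) * n) mod int g) = carrier (integer_mod_group g)"
  proof -
    have "range (\<lambda>n::int. n mod int g) = {0..<int g}"
    proof
      show "range (\<lambda>n::int. n mod int g) \<subseteq> {0..<int g}" using g0 by auto
      show "{0..<int g} \<subseteq> range (\<lambda>n::int. n mod int g)"
      proof
        fix x assume "x \<in> {0..<int g}"
        then have "x = x mod int g" by simp
        then show "x \<in> range (\<lambda>n::int. n mod int g)" by blast
      qed
    qed
    then show ?thesis using g0 qg by (simp add: carrier_integer_mod_group)
  qed
  ultimately show "(Ngroup S Mod multN (gS S) S) \<cong> integer_mod_group (gS S)"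
    by (simp add: g_def)
next
  have S0: "\<forall>p\<in>S. p > 0" using assms(2) by force
  show "\<forall>k. 1 \<le> k \<and> (infinite S \<or> k \<le> card S) \<longrightarrow>
           (\<exists>H. subgroup H (integer_mod_group (gk k S)) \<and>
               (Ngroup S Mod multN (gk k S) S) \<cong> (integer_mod_group (gk k S))\<lparr>carrier := H\<rparr>)"
  proof (intro allI impI)
    fix k assume k: "1 \<le> k \<and> (infinite S \<or> k \<le> card S)"
    define m where "m = (LEAST x. x \<in> S)"
    have m: "m \<in> S" "\<forall>x\<in>S. m \<le> x" unfolding m_def
      using assms(1) by (auto intro: LeastI Least_le)
    have "{q \<in> S. q < m} = {}" using m by force
    then have "card {q \<in> S. q < m} = 0" by (simp only: card.empty)
    then have "card {q \<in> S. q < m} < k" using k by linarith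
    then have msm: "m \<in> smallest k S" using m(1) unfolding smallest_def by blast
    define g where "g = gk k S"
    have g0: "g > 0" unfolding g_def gk_def
      by (rule Gcd_pos[OF msm]) (use assms(2) in \<open>auto simp: smallest_def\<close>)
    obtain q where q': "q > 0 \<and> q dvd g \<and> (\<forall>n. of_int n \<in> multN g S \<longleftrightarrow> int q dvd n)"
      using K_char[OF g0, of S] by (elim exE)
    then have q: "q > 0" "q dvd g" "\<And>n. of_int n \<in> multN g S \<longleftrightarrow> int q dvd n" by simp_all
    show "\<exists>H. subgroup H (integer_mod_group (gk k S)) \<and>
               (Ngroup S Mod multN (gk k S) S) \<cong> (integer_mod_group (gk k S))\<lparr>carrier := H\<rparr>"
      using quot_iso[OF g0 S0 q] unfolding g_def by blast
  qed
qed

end
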